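(* Let $P$ be a Poisson tensor on $\mathbb{R}^3$, let $H\in C^\infty(\mathbb{R}^3)$, let $S\in C^\infty(\mathbb{R}^3)$ satisfy $PdS=0$, and let $g$ be the symmetric tensor with components $g^{ij}=H^iH^j-\delta^{ij}\sum_k H^kH^k$. Let $x(t)$ be a solution of $\dot{x}=PdH+gdS$ with $x(0)=x_0$. If $d_{x_0}S=0$, then $d_{x(t)}S=0$ for all times $t$.
   Context: $\mathbb{R}^3$ carries the standard Euclidean metric, used to identify tangent and cotangent spaces with $\mathbb{R}^3$; $H^i=H_i=\partial H/\partial x^i$. A Poisson tensor is a skew-symmetric bivector field satisfying the Jacobi identity. *)

theory Defs
  imports "HOL-Analysis.Analysis"
begin

definition pd :: "3 \<Rightarrow> (real^3 \<Rightarrow> real) \<Rightarrow> real^3 \<Rightarrow> real" where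
  "pd i f x = frechet_derivative f (at x) (axis i 1)"

text \<open>Gradient (= dH under the Euclidean identification), components H^i = dH/dx^i.\<close>
definition grad :: "(real^3 \<Rightarrow> real) \<Rightarrow> real^3 \<Rightarrow> real^3" where
  "grad f x = (\<chi> i. pd i f x)"

fun Ck :: "nat \<Rightarrow> (real^3 \<Rightarrow> real) \<Rightarrow> bool" where
  "Ck 0 f = continuous_on UNIV f"
| "Ck (Suc k) f = (f differentiable_on UNIV \<and> (\<forall>i. Ck k (pd i f)))"

definition smooth :: "(real^3 \<Rightarrow> real) \<Rightarrow> bool" where
  "smooth f = (\<forall>k. Ck k f)"

definition poisson_tensor :: "(real^3 \<Rightarrow> real^3^3) \<Rightarrow> bool" where
  "poisson_tensor P =
     ((\<forall>i j. smooth (\<lambda>x. P x $ i $ j)) \<and>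
      (\<forall>x i j. P x $ i $ j = - (P x $ j $ i)) \<and>
      (\<forall>x i j k. (\<Sum>l\<in>UNIV.
          P x $ i $ l * pd l (\<lambda>y. P y $ j $ k) x
        + P x $ j $ l * pd l (\<lambda>y. P y $ k $ i) x
        + P x $ k $ l * pd l (\<lambda>y. P y $ i $ j) x) = 0))"

definition gten :: "(real^3 \<Rightarrow> real) \<Rightarrow> real^3 \<Rightarrow> real^3^3" where
  "gten H x = (\<chi> i j. grad H x $ i * grad H x $ j
                 - (if i = j then 1 else 0) * (\<Sum>k\<in>UNIV. grad H x $ k * grad H x $ k))"

end

theory Submission
  imports Defs
begin


lemma deriv_expand:
  fixes f :: "real^3 \<Rightarrow> real"
  assumes "f differentiable (at y)"
  shows "(f has_derivative (\<lambda>w. \<Sum>k\<in>UNIV. w$k * pd k f y)) (at y)"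
proof -
  have D: "(f has_derivative frechet_derivative f (at y)) (at y)"
    using assms frechet_derivative_works by blast
  then have L: "linear (frechet_derivative f (at y))"
    using has_derivative_linear by blast
  have "frechet_derivative f (at y) w = (\<Sum>k\<in>UNIV. w$k * pd k f y)" for w
  proof -
    have "frechet_derivative f (at y) w = frechet_derivative f (at y) (\<Sum>k\<in>UNIV. w$k *\<^sub>R axis k 1)"
      using basis_expansion[of w] by (simp add: scalar_mult_eq_scaleR)
    also have "\<dots> = (\<Sum>k\<in>UNIV. w$k * frechet_derivative f (at y) (axis k 1))"
      using L by (simp add: linear_sum linear_scale)
    finally show ?thesis by (simp add: pd_def)
  qed
  then show ?thesis using D by (metis (no_types, lifting) ext)
qed

lemma comp_deriv:
  fixes f :: "real^3 \<Rightarrow> real"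
  assumes "f differentiable (at (x t))" "(x has_vector_derivative xd) (at t)"
  shows "((\<lambda>t. f (x t)) has_real_derivative (\<Sum>k\<in>UNIV. xd$k * pd k f (x t))) (at t)"
proof -
  have "((f \<circ> x) has_derivative ((\<lambda>w. \<Sum>k\<in>UNIV. w$k * pd k f (x t)) \<circ> (\<lambda>h. h *\<^sub>R xd))) (at t)"
    using diff_chain_at[OF assms(2)[unfolded has_vector_derivative_def] deriv_expand[OF assms(1)]] .
  moreover have "((\<lambda>w. \<Sum>k\<in>UNIV. w$k * pd k f (x t)) \<circ> (\<lambda>h. h *\<^sub>R xd)) = (*) (\<Sum>k\<in>UNIV. xd$k * pd k f (x t))"
    by (auto simp: sum_distrib_left sum_distrib_right fun_eq_iff mult_ac)
  ultimately show ?thesis by (simp add: has_field_derivative_def o_def)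
qed

lemma ax_sum: "(\<Sum>k\<in>UNIV. (axis b (1::real) :: real^'n)$k * g k) = g b"
proof -
  have "\<And>k. (axis b (1::real) :: real^'n)$k * g k = (if b = k then g k else 0)" by (auto simp: axis_def)
  then show ?thesis by simp
qed

lemma line_deriv:
  fixes f :: "real^3 \<Rightarrow> real"
  assumes "\<forall>y. f differentiable (at y)"
  shows "((\<lambda>s. f (p + s *\<^sub>R axis b 1)) has_real_derivative pd b f (p + s *\<^sub>R axis b 1)) (at s)"
proof -
  have v: "((\<lambda>s. p + s *\<^sub>R axis b (1::real)) has_vector_derivative axis b 1) (at s)"
    by (auto intro!: derivative_eq_intros)
  have "(\<Sum>k\<in>UNIV. (axis b 1 :: real^3)$k * pd k f (p + s *\<^sub>R axis b 1)) = pd b f (p + s *\<^sub>R axis b 1)"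
    by (rule ax_sum)
  then show ?thesis using comp_deriv[of f "\<lambda>s. p + s *\<^sub>R axis b 1" s, OF _ v] assms by simp
qed

lemma delta_mvt:
  fixes f :: "real^3 \<Rightarrow> real"
  assumes d: "\<forall>y. f differentiable (at y)" and dk: "\<forall>y. pd k f differentiable (at y)"
    and h: "h > 0"
  shows "\<exists>\<xi>. norm (\<xi> - y) \<le> 2*h \<and>
    f (y + h *\<^sub>R axis i 1 + h *\<^sub>R axis k 1) - f (y + h *\<^sub>R axis k 1) - f (y + h *\<^sub>R axis i 1) + f y
      = h^2 * pd i (pd k f) \<xi>"
proof -
  define a :: "real^3" where "a = axis i 1"
  define b :: "real^3" where "b = axis k 1"
  define \<phi> where "\<phi> s = f (y + h *\<^sub>R a + s *\<^sub>R b) - f (y + s *\<^sub>R b)" for s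
  have "DERIV \<phi> s :> pd k f (y + h *\<^sub>R a + s *\<^sub>R b) - pd k f (y + s *\<^sub>R b)" for s
    unfolding \<phi>_def b_def
    using line_deriv[OF d, of "y + h *\<^sub>R a" k s] line_deriv[OF d, of y k s]
    by (intro DERIV_diff) auto
  then obtain s1 where s1: "0 < s1" "s1 < h"
    "\<phi> h - \<phi> 0 = (h - 0) * (pd k f (y + h *\<^sub>R a + s1 *\<^sub>R b) - pd k f (y + s1 *\<^sub>R b))"
    using MVT2[OF h, of \<phi> "\<lambda>s. pd k f (y + h *\<^sub>R a + s *\<^sub>R b) - pd k f (y + s *\<^sub>R b)"] by blast
  define \<psi> where "\<psi> r = pd k f (y + s1 *\<^sub>R b + r *\<^sub>R a)" for r
  have "DERIV \<psi> r :> pd i (pd k f) (y + s1 *\<^sub>R b + r *\<^sub>R a)" for r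
    unfolding \<psi>_def a_def using line_deriv[OF dk, of "y + s1 *\<^sub>R b" i r] by simp
  then obtain r1 where r1: "0 < r1" "r1 < h"
    "\<psi> h - \<psi> 0 = (h - 0) * pd i (pd k f) (y + s1 *\<^sub>R b + r1 *\<^sub>R a)"
    using MVT2[OF h, of \<psi> "\<lambda>r. pd i (pd k f) (y + s1 *\<^sub>R b + r *\<^sub>R a)"] by blast
  have "\<psi> h = pd k f (y + h *\<^sub>R a + s1 *\<^sub>R b)" unfolding \<psi>_def by (simp add: add_ac)
  moreover have "\<psi> 0 = pd k f (y + s1 *\<^sub>R b)" unfolding \<psi>_def by simp
  ultimately have e1: "pd k f (y + h *\<^sub>R a + s1 *\<^sub>R b) - pd k f (y + s1 *\<^sub>R b) = h * pd i (pd k f) (y + s1 *\<^sub>R b + r1 *\<^sub>R a)"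
    using r1 by simp
  have e2: "\<phi> h - \<phi> 0 = f (y + h *\<^sub>R a + h *\<^sub>R b) - f (y + h *\<^sub>R b) - f (y + h *\<^sub>R a) + f y"
    unfolding \<phi>_def by simp
  have n: "norm ((y + s1 *\<^sub>R b + r1 *\<^sub>R a) - y) \<le> 2*h"
  proof -
    have "norm ((y + s1 *\<^sub>R b + r1 *\<^sub>R a) - y) = norm (s1 *\<^sub>R b + r1 *\<^sub>R a)" by simp
    also have "\<dots> \<le> norm (s1 *\<^sub>R b) + norm (r1 *\<^sub>R a)" by (rule norm_triangle_ineq)
    also have "\<dots> = s1 + r1" using s1 r1 by (simp add: a_def b_def)
    finally show ?thesis using s1 r1 by simp
  qed
  show ?thesis
    apply (rule exI[of _ "y + s1 *\<^sub>R b + r1 *\<^sub>R a"])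
    using n s1(3) e1 e2 by (simp add: a_def b_def power2_eq_square)
qed

lemma clairaut:
  fixes f :: "real^3 \<Rightarrow> real"
  assumes d: "\<forall>y. f differentiable (at y)" and di: "\<forall>y. pd i f differentiable (at y)"
    and dk: "\<forall>y. pd k f differentiable (at y)"
    and ci: "continuous_on UNIV (pd k (pd i f))" and ck: "continuous_on UNIV (pd i (pd k f))"
  shows "pd k (pd i f) y = pd i (pd k f) y"
proof (rule ccontr)
  assume ne: "pd k (pd i f) y \<noteq> pd i (pd k f) y"
  define e where "e = \<bar>pd k (pd i f) y - pd i (pd k f) y\<bar> / 2"
  have e: "e > 0" using ne by (simp add: e_def)
  have "continuous (at y) (pd k (pd i f))" using ci continuous_on_eq_continuous_at by blast
  then obtain d1 where d1: "d1 > 0" "\<forall>z. dist z y < d1 \<longrightarrow> dist (pd k (pd i f) z) (pd k (pd i f) y) < e"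
    using e unfolding continuous_at_eps_delta by blast
  have "continuous (at y) (pd i (pd k f))" using ck continuous_on_eq_continuous_at by blast
  then obtain d2 where d2: "d2 > 0" "\<forall>z. dist z y < d2 \<longrightarrow> dist (pd i (pd k f) z) (pd i (pd k f) y) < e"
    using e unfolding continuous_at_eps_delta by blast
  define h where "h = min d1 d2 / 4"
  have h: "h > 0" using d1 d2 by (simp add: h_def)
  obtain \<xi> where \<xi>: "norm (\<xi> - y) \<le> 2*h"
    "f (y + h *\<^sub>R axis i 1 + h *\<^sub>R axis k 1) - f (y + h *\<^sub>R axis k 1) - f (y + h *\<^sub>R axis i 1) + f y
      = h^2 * pd i (pd k f) \<xi>"
    using delta_mvt[OF d dk h, of y i] by blast
  obtain \<eta> where \<eta>: "norm (\<eta> - y) \<le> 2*h"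
    "f (y + h *\<^sub>R axis k 1 + h *\<^sub>R axis i 1) - f (y + h *\<^sub>R axis i 1) - f (y + h *\<^sub>R axis k 1) + f y
      = h^2 * pd k (pd i f) \<eta>"
    using delta_mvt[OF d di h, of y k] by blast
  have "h^2 * pd i (pd k f) \<xi> = h^2 * pd k (pd i f) \<eta>"
  proof -
    have "y + h *\<^sub>R axis k 1 + h *\<^sub>R axis i 1 = y + h *\<^sub>R axis i 1 + h *\<^sub>R axis k (1::real)"
      by (simp add: add_ac)
    from \<eta>(2)[unfolded this] show ?thesis using \<xi>(2) by linarith
  qed
  then have eq: "pd i (pd k f) \<xi> = pd k (pd i f) \<eta>" using h by simp
  have "dist \<xi> y < d2" using \<xi>(1) h d1 d2 by (simp add: dist_norm h_def)
  then have A: "\<bar>pd i (pd k f) \<xi> - pd i (pd k f) y\<bar> < e" using d2 by (simp add: dist_real_def)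
  have "dist \<eta> y < d1" using \<eta>(1) h d1 d2 by (simp add: dist_norm h_def)
  then have B: "\<bar>pd k (pd i f) \<eta> - pd k (pd i f) y\<bar> < e" using d1 by (simp add: dist_real_def)
  show False using A B eq e_def abs_triangle_ineq[of "pd k (pd i f) y - pd k (pd i f) \<eta>" "pd i (pd k f) \<xi> - pd i (pd k f) y"] by (simp add: abs_minus_commute)
qed

lemma alg:
  fixes Pm dP G :: "3 \<Rightarrow> 3 \<Rightarrow> real" and D D' Hv Sv :: "3 \<Rightarrow> real"
  assumes sy: "\<forall>k. D k = D' k"
    and sk: "\<forall>k l. Pm k l = - Pm l k"
    and id: "\<forall>l. (\<Sum>k\<in>UNIV. dP l k * Sv k + Pm l k * D' k) = 0"
  shows "(\<Sum>k\<in>UNIV. ((\<Sum>l\<in>UNIV. Pm k l * Hv l) + (\<Sum>j\<in>UNIV. G k j * Sv j)) * D k)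
       = (\<Sum>j\<in>UNIV. ((\<Sum>l\<in>UNIV. Hv l * dP l j) + (\<Sum>k\<in>UNIV. D k * G k j)) * Sv j)"
proof -
  have a: "(\<Sum>k\<in>UNIV. (\<Sum>l\<in>UNIV. Pm k l * Hv l) * D k) = (\<Sum>j\<in>UNIV. (\<Sum>l\<in>UNIV. Hv l * dP l j) * Sv j)"
  proof -
    have "(\<Sum>k\<in>UNIV. (\<Sum>l\<in>UNIV. Pm k l * Hv l) * D k) = (\<Sum>l\<in>UNIV. Hv l * (\<Sum>k\<in>UNIV. Pm k l * D' k))"
    proof -
      have "D = D'" using sy by auto
      then have "(\<Sum>k\<in>UNIV. (\<Sum>l\<in>UNIV. Pm k l * Hv l) * D k) = (\<Sum>k\<in>UNIV. \<Sum>l\<in>UNIV. Pm k l * Hv l * D' k)"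
        by (simp add: sum_distrib_right)
      also have "\<dots> = (\<Sum>l\<in>UNIV. \<Sum>k\<in>UNIV. Pm k l * Hv l * D' k)" by (rule sum.swap)
      also have "\<dots> = (\<Sum>l\<in>UNIV. Hv l * (\<Sum>k\<in>UNIV. Pm k l * D' k))"
        by (simp add: sum_distrib_left mult_ac)
      finally show ?thesis .
    qed
    also have "\<dots> = (\<Sum>l\<in>UNIV. Hv l * (\<Sum>k\<in>UNIV. dP l k * Sv k))"
    proof (rule sum.cong[OF refl])
      fix l
      have "(\<Sum>k\<in>UNIV. Pm k l * D' k) = (\<Sum>k\<in>UNIV. - (Pm l k * D' k))"
        by (rule sum.cong[OF refl]) (metis sk mult_minus_left)
      also have "\<dots> = - (\<Sum>k\<in>UNIV. Pm l k * D' k)"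
        by (simp add: sum_negf)
      also have "\<dots> = (\<Sum>k\<in>UNIV. dP l k * Sv k)"
        using id[rule_format, of l] by (simp add: sum.distrib)
      finally show "Hv l * (\<Sum>k\<in>UNIV. Pm k l * D' k) = Hv l * (\<Sum>k\<in>UNIV. dP l k * Sv k)" by simp
    qed
    also have "\<dots> = (\<Sum>l\<in>UNIV. \<Sum>k\<in>UNIV. Hv l * dP l k * Sv k)"
      by (simp add: sum_distrib_left mult_ac)
    also have "\<dots> = (\<Sum>k\<in>UNIV. \<Sum>l\<in>UNIV. Hv l * dP l k * Sv k)" by (rule sum.swap)
    also have "\<dots> = (\<Sum>j\<in>UNIV. (\<Sum>l\<in>UNIV. Hv l * dP l j) * Sv j)"
      by (simp add: sum_distrib_right)
    finally show ?thesis .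
  qed
  have b: "(\<Sum>k\<in>UNIV. (\<Sum>j\<in>UNIV. G k j * Sv j) * D k) = (\<Sum>j\<in>UNIV. (\<Sum>k\<in>UNIV. D k * G k j) * Sv j)"
  proof -
    have "(\<Sum>k\<in>UNIV. (\<Sum>j\<in>UNIV. G k j * Sv j) * D k) = (\<Sum>k\<in>UNIV. \<Sum>j\<in>UNIV. D k * G k j * Sv j)"
      by (simp add: sum_distrib_right sum_distrib_left mult_ac)
    also have "\<dots> = (\<Sum>j\<in>UNIV. \<Sum>k\<in>UNIV. D k * G k j * Sv j)" by (rule sum.swap)
    also have "\<dots> = (\<Sum>j\<in>UNIV. (\<Sum>k\<in>UNIV. D k * G k j) * Sv j)"
      by (simp add: sum_distrib_right)
    finally show ?thesis .
  qed
  show ?thesis using a b by (simp add: distrib_right sum.distrib)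
qed

lemma bound:
  fixes B :: "3 \<Rightarrow> 3 \<Rightarrow> real" and v :: "3 \<Rightarrow> real"
  shows "\<bar>\<Sum>i\<in>UNIV. 2 * v i * (\<Sum>j\<in>UNIV. B i j * v j)\<bar>
     \<le> 2 * (\<Sum>i\<in>UNIV. \<Sum>j\<in>UNIV. \<bar>B i j\<bar>) * (\<Sum>i\<in>UNIV. (v i)^2)"
proof -
  define F where "F = (\<Sum>i\<in>UNIV. (v i)^2)"
  have sq: "(v i)^2 \<le> F" for i unfolding F_def
    by (rule member_le_sum) auto
  have pr: "\<bar>v i * v j\<bar> \<le> F" for i j
  proof -
    have "2 * \<bar>v i * v j\<bar> \<le> (v i)^2 + (v j)^2"
    proof -
      have "0 \<le> (\<bar>v i\<bar> - \<bar>v j\<bar>)^2" by simp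
      then show ?thesis by (simp add: power2_eq_square abs_mult algebra_simps)
    qed
    then show ?thesis using sq[of i] sq[of j] by linarith
  qed
  have "\<bar>\<Sum>i\<in>UNIV. 2 * v i * (\<Sum>j\<in>UNIV. B i j * v j)\<bar>
      = \<bar>\<Sum>i\<in>UNIV. \<Sum>j\<in>UNIV. 2 * B i j * (v i * v j)\<bar>"
    by (simp add: sum_distrib_left mult_ac)
  also have "\<dots> \<le> (\<Sum>i\<in>UNIV. \<Sum>j\<in>UNIV. \<bar>2 * B i j * (v i * v j)\<bar>)"
    by (rule order_trans[OF sum_abs]) (intro sum_mono sum_abs)
  also have "\<dots> \<le> (\<Sum>i\<in>UNIV. \<Sum>j\<in>UNIV. 2 * \<bar>B i j\<bar> * F)"
    using pr by (intro sum_mono) (simp add: abs_mult mult_left_mono)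
  also have "\<dots> = 2 * (\<Sum>i\<in>UNIV. \<Sum>j\<in>UNIV. \<bar>B i j\<bar>) * F"
    by (simp add: sum_distrib_left sum_distrib_right mult_ac)
  finally show ?thesis unfolding F_def .
qed

lemma exp_lin_deriv: "((\<lambda>t. exp (c * t)) has_real_derivative exp (c * t) * c) (at t)"
proof -
  have "((\<lambda>t. c * t) has_real_derivative c) (at t)" by (rule DERIV_cmult_Id)
  then show ?thesis by (rule DERIV_fun_exp)
qed

lemma gron_fwd:
  fixes f Df :: "real \<Rightarrow> real"
  assumes T: "0 \<le> T" and d: "\<forall>t\<in>{0..T}. (f has_real_derivative Df t) (at t)"
    and b: "\<forall>t\<in>{0..T}. Df t \<le> M * f t" and nn: "\<forall>t. f t \<ge> 0" and z: "f 0 = 0"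
  shows "f T = 0"
proof -
  define \<phi> where "\<phi> t = f t * exp (- M * t)" for t
  have "\<phi> T \<le> \<phi> 0"
  proof (rule DERIV_nonpos_imp_nonincreasing[of 0 T \<phi>, OF T])
    fix t assume t: "0 \<le> t" "t \<le> T"
    have "(\<phi> has_real_derivative (Df t * exp (- M * t) + exp (- M * t) * (- M) * f t)) (at t)"
      unfolding \<phi>_def using t d by (intro DERIV_mult exp_lin_deriv) auto
    moreover have "Df t * exp (- M * t) + exp (- M * t) * (- M) * f t \<le> 0"
    proof -
      have "Df t * exp (- M * t) + exp (- M * t) * (- M) * f t = (Df t - M * f t) * exp (- M * t)"
        by (simp add: algebra_simps)
      also have "\<dots> \<le> 0" using b t by (intro mult_nonpos_nonneg) auto
      finally show ?thesis .
    qed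
    ultimately show "\<exists>y. (\<phi> has_real_derivative y) (at t) \<and> y \<le> 0" by blast
  qed
  then have "f T * exp (- M * T) \<le> 0" using z by (simp add: \<phi>_def)
  then show ?thesis using nn by (auto simp: mult_le_0_iff intro: antisym)
qed

lemma gron_bwd:
  fixes f Df :: "real \<Rightarrow> real"
  assumes T: "T \<le> 0" and d: "\<forall>t\<in>{T..0}. (f has_real_derivative Df t) (at t)"
    and b: "\<forall>t\<in>{T..0}. - Df t \<le> M * f t" and nn: "\<forall>t. f t \<ge> 0" and z: "f 0 = 0"
  shows "f T = 0"
proof -
  define \<phi> where "\<phi> t = f t * exp (M * t)" for t
  have "\<phi> T \<le> \<phi> 0"
  proof (rule DERIV_nonneg_imp_nondecreasing[of T 0 \<phi>, OF T])
    fix t assume t: "T \<le> t" "t \<le> 0"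
    have "(\<phi> has_real_derivative (Df t * exp (M * t) + exp (M * t) * M * f t)) (at t)"
      unfolding \<phi>_def using t d by (intro DERIV_mult exp_lin_deriv) auto
    moreover have "Df t * exp (M * t) + exp (M * t) * M * f t \<ge> 0"
    proof -
      have "Df t * exp (M * t) + exp (M * t) * M * f t = (Df t + M * f t) * exp (M * t)"
        by (simp add: algebra_simps)
      also have "\<dots> \<ge> 0"
      proof -
        have "- Df t \<le> M * f t" using b t by auto
        then have "0 \<le> Df t + M * f t" by linarith
        then show ?thesis by simp
      qed
      finally show ?thesis .
    qed
    ultimately show "\<exists>y. (\<phi> has_real_derivative y) (at t) \<and> y \<ge> 0" by blast
  qed
  then have "f T * exp (M * T) \<le> 0" using z by (simp add: \<phi>_def)
  then show ?thesis using nn by (auto simp: mult_le_0_iff intro: antisym)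
qed

theorem mainTheorem10:
  fixes P :: "real^3 \<Rightarrow> real^3^3"
    and H S :: "real^3 \<Rightarrow> real"
    and x :: "real \<Rightarrow> real^3"
    and I :: "real set"
    and x0 :: "real^3"
  assumes "poisson_tensor P"
    and "smooth H" and "smooth S"
    and "\<forall>y. P y *v grad S y = 0"
    and "open I" and "is_interval I" and "0 \<in> I"
    and "\<forall>t\<in>I. (x has_vector_derivative
                 (P (x t) *v grad H (x t) + gten H (x t) *v grad S (x t))) (at t)"
    and "x 0 = x0"
    and "grad S x0 = 0"
  shows "\<forall>t\<in>I. grad S (x t) = 0"
proof -
  have S1: "Ck (Suc 0) S" and S2: "Ck (Suc (Suc 0)) S" using assms(3) unfolding smooth_def by blast+
  have Sd: "\<forall>y. S differentiable (at y)" using S1 by (simp add: differentiable_on_def)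
  have Sc1: "\<forall>k. continuous_on UNIV (pd k S)" using S1 by simp
  have Sid: "\<forall>i y. pd i S differentiable (at y)" using S2 by (simp add: differentiable_on_def)
  have Sc2: "\<forall>i k. continuous_on UNIV (pd k (pd i S))" using S2 by simp
  have H1: "Ck (Suc 0) H" using assms(2) unfolding smooth_def by blast
  have Hc: "\<forall>l. continuous_on UNIV (pd l H)" using H1 by simp
  have PT: "\<forall>i j. smooth (\<lambda>x. P x $ i $ j)" "\<forall>x i j. P x $ i $ j = - (P x $ j $ i)"
    using assms(1) unfolding poisson_tensor_def by blast+
  have P1: "Ck (Suc 0) (\<lambda>x. P x $ l $ j)" for l j using PT(1) unfolding smooth_def by blast
  have Pd: "\<forall>l j y. (\<lambda>y. P y $ l $ j) differentiable (at y)" using P1 by (simp add: differentiable_on_def)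
  have Pc: "\<forall>i l j. continuous_on UNIV (pd i (\<lambda>y. P y $ l $ j))" using P1 by simp
  have sym: "\<forall>i k y. pd k (pd i S) y = pd i (pd k S) y"
    using clairaut Sd Sid Sc2 by blast
  have ident: "\<forall>l i y. (\<Sum>k\<in>UNIV. pd i (\<lambda>y. P y $ l $ k) y * pd k S y + P y $ l $ k * pd i (pd k S) y) = 0"
  proof (intro allI)
    fix l i y
    define F where "F = (\<lambda>y. \<Sum>k\<in>UNIV. P y $ l $ k * pd k S y)"
    have "F z = 0" for z
    proof -
      have "(P z *v grad S z) $ l = 0" using assms(4) by simp
      then show ?thesis by (simp add: F_def matrix_vector_mult_def grad_def)
    qed
    then have F0: "F = (\<lambda>y. 0)" by auto
    have D1: "(F has_derivative (\<lambda>w. \<Sum>k\<in>UNIV. P y $ l $ k * (\<Sum>m\<in>UNIV. w$m * pd m (pd k S) y)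
          + (\<Sum>m\<in>UNIV. w$m * pd m (\<lambda>y. P y $ l $ k) y) * pd k S y)) (at y)"
      unfolding F_def using Pd Sid by (intro has_derivative_sum has_derivative_mult deriv_expand) auto
    have D2: "(F has_derivative (\<lambda>w. 0)) (at y)" unfolding F0 by simp
    have "(\<lambda>w. \<Sum>k\<in>UNIV. P y $ l $ k * (\<Sum>m\<in>UNIV. w$m * pd m (pd k S) y)
          + (\<Sum>m\<in>UNIV. w$m * pd m (\<lambda>y. P y $ l $ k) y) * pd k S y) = (\<lambda>w. 0)"
      by (rule has_derivative_unique[OF D1 D2])
    from fun_cong[OF this, of "axis i 1"]
    show "(\<Sum>k\<in>UNIV. pd i (\<lambda>y. P y $ l $ k) y * pd k S y + P y $ l $ k * pd i (pd k S) y) = 0"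
      by (simp add: ax_sum add.commute)
  qed
  define B where "B t i j = (\<Sum>l\<in>UNIV. pd l H (x t) * pd i (\<lambda>y. P y $ l $ j) (x t))
      + (\<Sum>k\<in>UNIV. pd k (pd i S) (x t) * gten H (x t) $ k $ j)" for t i j
  have dv: "((\<lambda>t. pd i S (x t)) has_real_derivative (\<Sum>j\<in>UNIV. B t i j * pd j S (x t))) (at t)"
    if "t \<in> I" for t i
  proof -
    define xd where "xd = P (x t) *v grad H (x t) + gten H (x t) *v grad S (x t)"
    have "((\<lambda>t. pd i S (x t)) has_real_derivative (\<Sum>k\<in>UNIV. xd$k * pd k (pd i S) (x t))) (at t)"
      using comp_deriv[of "pd i S" x t xd] Sid assms(8) that by (simp add: xd_def)
    moreover have "(\<Sum>k\<in>UNIV. xd$k * pd k (pd i S) (x t)) = (\<Sum>j\<in>UNIV. B t i j * pd j S (x t))"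
    proof -
      have a1: "\<forall>k. pd k (pd i S) (x t) = pd i (pd k S) (x t)" using sym by blast
      have a2: "\<forall>k l. P (x t)$k$l = - P (x t)$l$k" using PT(2) by blast
      have a3: "\<forall>l. (\<Sum>k\<in>UNIV. pd i (\<lambda>y. P y $ l $ k) (x t) * pd k S (x t) + P (x t) $ l $ k * pd i (pd k S) (x t)) = 0"
        using ident by blast
      note A = alg[OF a1 a2 a3, where G="\<lambda>k j. gten H (x t)$k$j" and Hv="\<lambda>l. pd l H (x t)"]
      show ?thesis unfolding xd_def B_def using A
        by (simp add: matrix_vector_mult_def grad_def)
    qed
    ultimately show ?thesis by simp
  qed
  define fv where "fv t = (\<Sum>i\<in>UNIV. (pd i S (x t))^2)" for t
  define C where "C t = 2 * (\<Sum>i\<in>UNIV. \<Sum>j\<in>UNIV. \<bar>B t i j\<bar>)" for t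
  define Df where "Df t = (\<Sum>i\<in>UNIV. 2 * pd i S (x t) * (\<Sum>j\<in>UNIV. B t i j * pd j S (x t)))" for t
  have df: "(fv has_real_derivative Df t) (at t)" if "t \<in> I" for t
  proof -
    have "((\<lambda>t. (pd i S (x t))^2) has_real_derivative 2 * pd i S (x t) * (\<Sum>j\<in>UNIV. B t i j * pd j S (x t))) (at t)" for i
      using DERIV_power[OF dv[OF that, of i], where n=2] by (simp add: mult_ac)
    then show ?thesis unfolding fv_def Df_def by (intro DERIV_sum) auto
  qed
  have fb: "\<bar>Df t\<bar> \<le> C t * fv t" for t
    unfolding Df_def C_def fv_def by (rule bound)
  have fnn: "fv t \<ge> 0" for t unfolding fv_def by (intro sum_nonneg) auto
  have f0: "fv 0 = 0"
  proof -
    have "pd i S x0 = 0" for i using assms(10) unfolding grad_def by (metis vec_lambda_beta zero_index)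
    then show ?thesis unfolding fv_def using assms(9) by simp
  qed
  have xc: "continuous_on I x"
    using assms(8) by (meson continuous_at_imp_continuous_on has_vector_derivative_continuous)
  have cc: "continuous_on I (\<lambda>t. g (x t))" if "continuous_on UNIV g" for g :: "real^3 \<Rightarrow> real"
    by (rule continuous_on_compose2[OF that xc]) auto
  have cH: "continuous_on I (\<lambda>t. pd l H (x t))" for l using cc Hc by blast
  have cS2: "continuous_on I (\<lambda>t. pd k (pd i S) (x t))" for i k using cc Sc2 by blast
  have cPt: "continuous_on I (\<lambda>t. pd i (\<lambda>y. P y $ l $ j) (x t))" for i l j using cc Pc by blast
  have cg: "continuous_on I (\<lambda>t. gten H (x t) $ k $ j)" for k j
    unfolding gten_def grad_def by (simp only: vec_lambda_beta) (intro continuous_intros cH)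
  have cB: "continuous_on I (\<lambda>t. B t i j)" for i j
    unfolding B_def by (intro continuous_intros cH cPt cS2 cg)
  have Cc: "continuous_on I C"
    unfolding C_def by (intro continuous_intros cB)
  show ?thesis
  proof
    fix T assume T: "T \<in> I"
    define J where "J = (if 0 \<le> T then {0..T} else {T..0})"
    have JI: "J \<subseteq> I"
    proof
      fix t assume "t \<in> J"
      then have "min 0 T \<le> t \<and> t \<le> max 0 T" by (auto simp: J_def split: if_splits)
      moreover have "min 0 T \<in> I" "max 0 T \<in> I" using assms(7) T by (auto simp: min_def max_def)
      ultimately show "t \<in> I" using assms(6) unfolding is_interval_1 by blast
    qed
    have "compact J" by (simp add: J_def)
    then have "compact (C ` J)" by (rule compact_continuous_image[OF continuous_on_subset[OF Cc JI]])
    then have "bounded (C ` J)" by (rule compact_imp_bounded)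
    then obtain M where "\<forall>y\<in>C ` J. \<bar>y\<bar> \<le> M" unfolding bounded_real by blast
    then have M: "\<forall>t\<in>J. \<bar>C t\<bar> \<le> M" by blast
    have key: "Df t \<le> M * fv t" "- Df t \<le> M * fv t" if "t \<in> J" for t
    proof -
      have "C t * fv t \<le> M * fv t" using M that fnn by (intro mult_right_mono) auto
      then show "Df t \<le> M * fv t" "- Df t \<le> M * fv t" using fb[of t] by auto
    qed
    have "fv T = 0"
    proof (cases "0 \<le> T")
      case True
      have sub: "{0..T} \<subseteq> J" "{0..T} \<subseteq> I" using True JI by (auto simp: J_def)
      have d': "\<forall>t\<in>{0..T}. (fv has_real_derivative Df t) (at t)" using sub(2) df by blast
      have b': "\<forall>t\<in>{0..T}. Df t \<le> M * fv t" using sub(1) key(1) by blast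
      show ?thesis by (rule gron_fwd[OF True d' b']) (use fnn f0 in auto)
    next
      case False
      then have F: "T \<le> 0" by simp
      have sub: "{T..0} \<subseteq> J" "{T..0} \<subseteq> I" using F JI by (auto simp: J_def)
      have d': "\<forall>t\<in>{T..0}. (fv has_real_derivative Df t) (at t)" using sub(2) df by blast
      have b': "\<forall>t\<in>{T..0}. - Df t \<le> M * fv t" using sub(1) key(2) by blast
      show ?thesis by (rule gron_bwd[OF F d' b']) (use fnn f0 in auto)
    qed
    then have "\<forall>i\<in>UNIV. (pd i S (x T))^2 = 0"
      unfolding fv_def by (subst sum_nonneg_eq_0_iff[symmetric]) auto
    then show "grad S (x T) = 0" by (simp add: grad_def vec_eq_iff)
  qed
qed

end
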